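(* For each integer $n \ge 0$ let $L_n(x)$ denote the $n$-th Laguerre polynomial, $L_n(x) = \sum_{k=0}^{n} (-1)^k \binom{n}{k} \frac{x^k}{k!}$. Let $T$ be the linear transformation on the real vector space $\mathbb{R}[x]$ of real polynomials defined by $T(x^n) = L_n(x)$ for all $n \ge 0$, extended linearly. Then $T$ preserves real-rootedness: if $f \in \mathbb{R}[x]$ has all of its roots real, then $T(f)$ has all of its roots real.
   Context: A real polynomial is said to have all real roots (to be real-rooted) if every one of its complex roots is real. A linear transformation on polynomials preserves real-rootedness if it maps every polynomial with all real roots to a polynomial with all real roots. *)

theory Defs
  imports "HOL-Computational_Algebra.Polynomial" Complex_Main
begin

definition real_rooted :: "real poly \<Rightarrow> bool" where
  "real_rooted p \<longleftrightarrow> (\<forall>z::complex. poly (map_poly complex_of_real p) z = 0 \<longrightarrow> z \<in> \<real>)"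

definition laguerre :: "nat \<Rightarrow> real poly" where
  "laguerre n = (\<Sum>k\<le>n. monom ((-1)^k * real (n choose k) / fact k) k)"

definition laguerre_transform :: "real poly \<Rightarrow> real poly" where
  "laguerre_transform f = (\<Sum>i\<le>degree f. smult (coeff f i) (laguerre i))"

end

theory Submission imports Defs "HOL-Computational_Algebra.Fundamental_Theorem_Algebra"
begin

abbreviation CR :: "real poly \<Rightarrow> complex poly" where "CR p \<equiv> map_poly complex_of_real p"

lemma CR_add: "CR (p + q) = CR p + CR q"
  by (intro poly_eqI) (simp add: coeff_map_poly)

lemma CR_smult: "CR (smult c p) = smult (of_real c) (CR p)"
  by (intro poly_eqI) (simp add: coeff_map_poly)

lemma CR_pCons: "CR (pCons c p) = pCons (of_real c) (CR p)"
  by (simp add: map_poly_pCons)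

lemma CR_mult: "CR (p * q) = CR p * CR q"
  by (induction p) (simp_all add: CR_add CR_smult CR_pCons)

lemma CR_pderiv: "CR (pderiv p) = pderiv (CR p)"
  by (intro poly_eqI) (simp add: coeff_map_poly coeff_pderiv)

lemma poly_CR: "poly (CR p) (of_real x) = of_real (poly p x)"
  by (induction p) (auto simp: map_poly_pCons)

lemma rr_nonzero: "real_rooted p \<Longrightarrow> p \<noteq> 0"
  unfolding real_rooted_def
  by (metis complex_is_Real_iff complex_i_not_zero imaginary_unit.sel(2) map_poly_0 poly_0 zero_neq_one)

lemma rr_factor:
  assumes "real_rooted p"
  shows "\<exists>c rs. c \<noteq> 0 \<and> p = smult c (\<Prod>r\<leftarrow>rs. [:-r,1:])"
  using assms
proof (induction "degree p" arbitrary: p rule: less_induct)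
  case less
  have p0: "p \<noteq> 0" using rr_nonzero less.prems .
  show ?case
  proof (cases "degree p = 0")
    case True
    then obtain c where "p = [:c:]" by (meson degree_eq_zeroE)
    with p0 show ?thesis by (intro exI[of _ c] exI[of _ "[]"]) auto
  next
    case False
    have "degree (CR p) = degree p" by (simp add: degree_map_poly)
    with False have "\<not> constant (poly (CR p))" by (simp add: constant_degree)
    then obtain z where z: "poly (CR p) z = 0" using fundamental_theorem_of_algebra by blast
    with less.prems have "z \<in> \<real>" unfolding real_rooted_def by blast
    then obtain r where zr: "z = of_real r" by (auto elim: Reals_cases)
    with z poly_CR[of p r] have "poly p r = 0" by simp
    then obtain q where pq: "p = [:-r,1:] * q" by (metis dvdE poly_eq_0_iff_dvd)
    have q0: "q \<noteq> 0" using p0 pq by auto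
    have dq: "degree q < degree p" unfolding pq using q0 by (subst degree_mult_eq) auto
    have "real_rooted q"
      unfolding real_rooted_def
    proof (intro allI impI)
      fix w assume "poly (CR q) w = 0"
      hence "poly (CR p) w = 0" unfolding pq CR_mult by (simp del: mult_pCons_left)
      thus "w \<in> \<real>" using less.prems unfolding real_rooted_def by blast
    qed
    from less.hyps[OF dq this] obtain c rs where "c \<noteq> 0" "q = smult c (\<Prod>r\<leftarrow>rs. [:-r,1:])" by blast
    thus ?thesis by (intro exI[of _ c] exI[of _ "r # rs"]) (simp add: pq mult_ac)
  qed
qed


lemma logder:
  fixes z :: complex and rs :: "real list"
  assumes "Im z \<noteq> 0"
  defines "Q \<equiv> (\<Prod>r\<leftarrow>rs. [:- complex_of_real r, 1:])"
  shows "poly Q z \<noteq> 0 \<and> Im z * Im (poly (pderiv Q) z / poly Q z) \<le> 0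
         \<and> (rs \<noteq> [] \<longrightarrow> Im z * Im (poly (pderiv Q) z / poly Q z) < 0)"
  unfolding Q_def
proof (induction rs)
  case Nil
  then show ?case by simp
next
  case (Cons a rs)
  define R where "R = (\<Prod>r\<leftarrow>rs. [:- complex_of_real r, 1:])"
  have za: "z - of_real a \<noteq> 0" using assms by (metis Im_complex_of_real diff_eq_eq add_0)
  from Cons.IH have R0: "poly R z \<noteq> 0" and IH: "Im z * Im (poly (pderiv R) z / poly R z) \<le> 0"
    unfolding R_def by auto
  have ev: "poly ([:- complex_of_real a, 1:] * R) z = (z - of_real a) * poly R z"
    by (simp add: left_diff_distrib)
  have dv: "poly (pderiv ([:- complex_of_real a, 1:] * R)) z = poly R z + (z - of_real a) * poly (pderiv R) z"
  proof -
    have d1: "pderiv [:- complex_of_real a, 1:] = 1" by (simp add: pderiv_pCons)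
    show ?thesis unfolding pderiv_mult d1 poly_mult poly_1 poly_add by (simp add: algebra_simps)
  qed
  have ratio: "poly (pderiv ([:- complex_of_real a, 1:] * R)) z / poly ([:- complex_of_real a, 1:] * R) z
     = inverse (z - of_real a) + poly (pderiv R) z / poly R z"
    unfolding ev dv using za R0 by (simp add: field_simps)
  have imi: "Im (inverse (z - of_real a)) = - Im z / ((Re z - a)^2 + (Im z)^2)"
    by (simp add: power2_eq_square)
  have D: "(Re z - a)^2 + (Im z)^2 > 0" using assms by (simp add: add_nonneg_pos)
  have "(Im z)^2 / ((Re z - a)^2 + (Im z)^2) > 0" using assms D by simp
  hence "Im z * Im (inverse (z - of_real a)) < 0" unfolding imi
    by (simp add: power2_eq_square)
  then have "Im z * Im (inverse (z - of_real a)) + Im z * Im (poly (pderiv R) z / poly R z) < 0"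
    using IH by linarith
  then have "Im z * Im (poly (pderiv ([:- complex_of_real a, 1:] * R)) z / poly ([:- complex_of_real a, 1:] * R) z) < 0"
    unfolding ratio plus_complex.sel distrib_left .
  then show ?case using za R0 ev unfolding R_def by simp
qed

lemma CR_prod: "CR (\<Prod>r\<leftarrow>rs. [:-r,1:]) = (\<Prod>r\<leftarrow>rs. [:- complex_of_real r, 1:])"
  by (induction rs) (simp_all add: CR_mult CR_pCons del: mult_pCons_left)

lemma op_rr:
  assumes "real_rooted p"
  shows "real_rooted (p + smult a (pderiv p))"
  unfolding real_rooted_def
proof (intro allI impI)
  fix z assume z: "poly (CR (p + smult a (pderiv p))) z = 0"
  show "z \<in> \<real>"
  proof (rule ccontr)
    assume "z \<notin> \<real>"
    hence imz: "Im z \<noteq> 0" by (simp add: complex_is_Real_iff)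
    obtain c rs where c: "c \<noteq> 0" and pf: "p = smult c (\<Prod>r\<leftarrow>rs. [:-r,1:])"
      using rr_factor[OF assms] by blast
    define Q where "Q = (\<Prod>r\<leftarrow>rs. [:- complex_of_real r, 1:])"
    have CRp: "CR p = smult (of_real c) Q" unfolding pf CR_smult CR_prod Q_def ..
    have "poly (CR p) z + of_real a * poly (pderiv (CR p)) z = 0"
      using z by (simp add: CR_add CR_smult CR_pderiv)
    hence "of_real c * (poly Q z + of_real a * poly (pderiv Q) z) = 0"
      unfolding CRp by (simp add: pderiv_smult algebra_simps)
    hence eq: "poly Q z + of_real a * poly (pderiv Q) z = 0" using c by simp
    from logder[OF imz, of rs] have Q0: "poly Q z \<noteq> 0"
      and L: "rs \<noteq> [] \<longrightarrow> Im z * Im (poly (pderiv Q) z / poly Q z) < 0"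
      unfolding Q_def by auto
    have aQ: "of_real a * poly (pderiv Q) z \<noteq> 0" using eq Q0 by auto
    hence a0: "a \<noteq> 0" by auto
    have rsne: "rs \<noteq> []" using aQ unfolding Q_def by auto
    have "poly (pderiv Q) z / poly Q z = - inverse (of_real a)"
      using eq Q0 a0 by (simp add: field_simps add_eq_0_iff)
    hence "Im (poly (pderiv Q) z / poly Q z) = 0" by simp
    with L rsne show False by simp
  qed
qed


lemma smult_sumR: "smult a (sum f S) = (\<Sum>i\<in>S. smult a (f i))"
  by (induction S rule: infinite_finite_induct) (simp_all add: smult_add_right)

definition opD :: "real poly \<Rightarrow> real poly \<Rightarrow> real poly" where
  "opD h p = (\<Sum>j\<le>degree p. smult (coeff h j) ((pderiv ^^ j) p))"

lemma higher_pderiv_eq0: "degree p < j \<Longrightarrow> (pderiv ^^ j) (p::real poly) = 0"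
  by (intro poly_eqI) (simp add: coeff_higher_pderiv coeff_eq_0)

lemma opD_ext: "degree p \<le> N \<Longrightarrow> opD h p = (\<Sum>j\<le>N. smult (coeff h j) ((pderiv ^^ j) p))"
  unfolding opD_def by (rule sum.mono_neutral_left) (auto simp: higher_pderiv_eq0)

lemma opD_add: "opD (h1 + h2) p = opD h1 p + opD h2 p"
  by (simp add: opD_def sum.distrib smult_add_left)

lemma opD_smult: "opD (smult a h) p = smult a (opD h p)"
  by (simp add: opD_def smult_sumR)

lemma opD_const: "opD [:c:] p = smult c p"
proof -
  have "opD [:c:] p = (\<Sum>j\<in>{0}. smult (coeff [:c:] j) ((pderiv ^^ j) p))"
    unfolding opD_def by (rule sum.mono_neutral_right) (auto simp: coeff_pCons split: nat.splits)
  thus ?thesis by simp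
qed

lemma opD_pCons0: "opD (pCons 0 h) p = opD h (pderiv p)"
proof -
  have "opD (pCons 0 h) p = (\<Sum>j\<le>Suc (degree p). smult (coeff (pCons 0 h) j) ((pderiv ^^ j) p))"
    by (rule opD_ext) simp
  also have "\<dots> = (\<Sum>j\<le>degree p. smult (coeff h j) ((pderiv ^^ Suc j) p))"
    by (subst sum.atMost_Suc_shift) simp
  also have "\<dots> = (\<Sum>j\<le>degree p. smult (coeff h j) ((pderiv ^^ j) (pderiv p)))"
    by (simp add: funpow_Suc_right del: funpow.simps)
  also have "\<dots> = opD h (pderiv p)"
    by (rule opD_ext[symmetric]) (simp add: degree_pderiv)
  finally show ?thesis .
qed

lemma pderiv_sum': "pderiv (sum f A) = (\<Sum>x\<in>A. pderiv (f x))"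
  using higher_pderiv_sum[of 1 f A] by simp

lemma pderiv_opD: "pderiv (opD h p) = opD h (pderiv p)"
proof -
  have "pderiv (opD h p) = (\<Sum>j\<le>degree p. smult (coeff h j) ((pderiv ^^ j) (pderiv p)))"
    unfolding opD_def pderiv_sum' pderiv_smult
    by (simp add: funpow_swap1)
  also have "\<dots> = opD h (pderiv p)"
    by (rule opD_ext[symmetric]) (simp add: degree_pderiv)
  finally show ?thesis .
qed

lemma opD_step: "opD ([:1,a:] * h) p = opD h p + smult a (pderiv (opD h p))"
proof -
  have "[:1,a:] * h = h + pCons 0 (smult a h)" by simp
  thus ?thesis by (simp add: opD_add opD_pCons0 opD_smult pderiv_opD)
qed

lemma rr_monom: "c \<noteq> 0 \<Longrightarrow> real_rooted (monom c n)"
  unfolding real_rooted_def by (simp add: map_poly_monom poly_monom)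

lemma opD_rr:
  assumes "c \<noteq> 0"
  shows "real_rooted (opD (smult c (\<Prod>a\<leftarrow>as. [:1,a:])) (monom 1 n))"
proof (induction as)
  case Nil
  then show ?case using assms by (simp add: opD_const rr_monom smult_monom)
next
  case (Cons a as)
  have "smult c (\<Prod>a\<leftarrow>a#as. [:1,a:]) = [:1,a:] * smult c (\<Prod>a\<leftarrow>as. [:1,a:])"
    by simp
  then show ?case using Cons by (simp only: opD_step op_rr)
qed


lemma coeff_laguerre: "coeff (laguerre i) k = (-1)^k * real (i choose k) / fact k"
proof (cases "k \<le> i")
  case True
  have "coeff (laguerre i) k = (\<Sum>j\<in>{k}. coeff (monom ((-1)^j * real (i choose j) / fact j) j) k)"
    unfolding laguerre_def coeff_sum
    by (rule sum.mono_neutral_right) (use True in \<open>auto simp: coeff_monom\<close>)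
  thus ?thesis by (simp add: coeff_monom)
next
  case False
  have "coeff (laguerre i) k = 0"
    unfolding laguerre_def coeff_sum using False by (auto simp: coeff_monom intro!: sum.neutral)
  thus ?thesis using False by simp
qed

definition Rn :: "nat \<Rightarrow> real poly \<Rightarrow> real poly" where
  "Rn n f = (\<Sum>m\<le>n. smult (coeff f m) (monom 1 (n - m) * [:1,1:]^m))"

lemma coeff_Rn:
  assumes "k \<le> n"
  shows "coeff (Rn n f) (n - k) = (\<Sum>m\<le>n. coeff f m * real (m choose k))"
  unfolding Rn_def coeff_sum
proof (rule sum.cong[OF refl])
  fix m assume "m \<in> {..n}"
  hence mn: "m \<le> n" by simp
  show "coeff (smult (coeff f m) (monom 1 (n - m) * [:1, 1:] ^ m)) (n - k) = coeff f m * real (m choose k)"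
  proof (cases "k \<le> m")
    case True
    have "n - k - (n - m) = m - k" using True mn by simp
    then show ?thesis using True mn
      by (simp add: coeff_monom_mult coeff_linear_poly_power binomial_symmetric[symmetric])
  next
    case False
    have "n - k < n - m" using False mn assms by linarith
    then show ?thesis using False by (simp add: coeff_monom_mult)
  qed
qed

lemma poch_fact: "k \<le> n \<Longrightarrow> pochhammer (real k + 1) (n - k) = fact n / fact k"
proof -
  assume "k \<le> n"
  have "pochhammer (1::real) (k + (n - k)) = pochhammer 1 k * pochhammer (1 + of_nat k) (n - k)"
    by (rule pochhammer_product')
  hence "fact n = fact k * pochhammer (real k + 1) (n - k)"
    using \<open>k \<le> n\<close> by (simp add: pochhammer_fact add.commute)
  thus ?thesis by (simp add: field_simps)
qed

lemma I1:
  assumes "degree f = n"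
  shows "smult (fact n) (pcompose (laguerre_transform f) [:0,-1:]) = opD (Rn n f) (monom 1 n)"
proof (rule poly_eqI)
  fix k
  have L: "coeff (smult (fact n) (pcompose (laguerre_transform f) [:0,-1:])) k
      = fact n / fact k * (\<Sum>m\<le>n. coeff f m * real (m choose k))"
    unfolding coeff_smult coeff_pcompose_linear laguerre_transform_def coeff_sum assms
    by (simp add: coeff_laguerre sum_distrib_left field_simps power_mult_distrib[symmetric])
  have R: "coeff (opD (Rn n f) (monom 1 n)) k
      = (\<Sum>j\<le>n. coeff (Rn n f) j * (pochhammer (real k + 1) j * (if n = j + k then 1 else 0)))"
    unfolding opD_def coeff_sum by (simp add: coeff_higher_pderiv coeff_monom degree_monom_eq add.commute)
  show "coeff (smult (fact n) (pcompose (laguerre_transform f) [:0,-1:])) k = coeff (opD (Rn n f) (monom 1 n)) k"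
  proof (cases "k \<le> n")
    case True
    have "coeff (opD (Rn n f) (monom 1 n)) k
      = (\<Sum>j\<in>{n-k}. coeff (Rn n f) j * (pochhammer (real k + 1) j * (if n = j + k then 1 else 0)))"
      unfolding R by (rule sum.mono_neutral_right) auto
    also have "\<dots> = (\<Sum>m\<le>n. coeff f m * real (m choose k)) * (fact n / fact k)"
      using True by (simp add: coeff_Rn poch_fact)
    finally show ?thesis unfolding L by simp
  next
    case False
    have "(\<Sum>m\<le>n. coeff f m * real (m choose k)) = 0"
      using False by (intro sum.neutral) auto
    moreover have "coeff (opD (Rn n f) (monom 1 n)) k = 0"
      unfolding R using False by (intro sum.neutral) auto
    ultimately show ?thesis unfolding L by simp
  qed
qed

lemma prod_lin_nz: "(\<Prod>r\<leftarrow>rs. [:-r,1:] :: real poly) \<noteq> 0"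
  by (induction rs) (simp_all del: mult_pCons_left)

lemma degree_prod_lin: "degree (\<Prod>r\<leftarrow>rs. [:-r,1:] :: real poly) = length rs"
proof (induction rs)
  case (Cons a rs)
  have "degree ([:-a,1:] * (\<Prod>r\<leftarrow>rs. [:-r,1:] :: real poly)) = 1 + length rs"
    by (subst degree_mult_eq) (use prod_lin_nz Cons in auto)
  then show ?case by simp
qed simp

lemma degree_prod_lin_le: "degree (\<Prod>r\<leftarrow>rs. [:-r,1:] :: real poly) \<le> length rs"
  using degree_prod_lin by simp

lemma Rn_smult: "Rn n (smult c g) = smult c (Rn n g)"
  by (simp add: Rn_def smult_sumR)

lemma Rn_diff: "Rn n (p - q) = Rn n p - Rn n q"
  by (simp add: Rn_def sum_subtractf smult_diff_left)

lemma pCons0_sum: "(\<Sum>x\<in>A. pCons 0 (f x)) = pCons 0 (sum f A)"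
  by (induction A rule: infinite_finite_induct) simp_all

lemma Rn_x: "degree g \<le> n \<Longrightarrow> Rn (Suc n) g = pCons 0 (Rn n g)"
proof -
  assume dg: "degree g \<le> n"
  have "Rn (Suc n) g = (\<Sum>m\<le>n. smult (coeff g m) (monom 1 (Suc n - m) * [:1,1:]^m))"
    unfolding Rn_def using dg by (simp add: coeff_eq_0)
  also have "\<dots> = (\<Sum>m\<le>n. pCons 0 (smult (coeff g m) (monom 1 (n - m) * [:1,1:]^m)))"
    by (intro sum.cong refl) (simp add: Suc_diff_le monom_Suc)
  also have "\<dots> = pCons 0 (Rn n g)"
    unfolding Rn_def pCons0_sum ..
  finally show ?thesis .
qed

lemma Rn_shift: "Rn (Suc n) (pCons 0 g) = [:1,1:] * Rn n g"
proof -
  have "Rn (Suc n) (pCons 0 g) = (\<Sum>m\<le>n. smult (coeff g m) (monom 1 (n - m) * [:1,1:]^Suc m))"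
    unfolding Rn_def by (subst sum.atMost_Suc_shift) simp
  also have "\<dots> = [:1,1:] * Rn n g"
    unfolding Rn_def by (simp add: sum_distrib_left mult_ac del: mult_pCons_left)
  finally show ?thesis .
qed

lemma Rn_prod: "Rn (length rs) (\<Prod>r\<leftarrow>rs. [:-r,1:]) = (\<Prod>r\<leftarrow>rs. [:1,1-r:])"
proof (induction rs)
  case Nil
  then show ?case by (simp add: Rn_def)
next
  case (Cons r rs)
  define g where "g = (\<Prod>r\<leftarrow>rs. [:-r,1:] :: real poly)"
  have dg: "degree g \<le> length rs" unfolding g_def by (rule degree_prod_lin_le)
  have "[:-r,1:] * g = pCons 0 g - smult r g" by simp
  hence "Rn (length (r#rs)) ([:-r,1:] * g) = [:1,1:] * Rn (length rs) g - smult r (pCons 0 (Rn (length rs) g))"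
    using dg by (simp add: Rn_diff Rn_smult Rn_shift Rn_x del: mult_pCons_left)
  also have "\<dots> = [:1,1-r:] * Rn (length rs) g"
    by (intro poly_eqI) (simp add: coeff_pCons algebra_simps split: nat.split)
  finally show ?case using Cons unfolding g_def by simp
qed

lemma CR_pcomp: "CR (pcompose g [:0,-1:]) = pcompose (CR g) [:0,-1:]"
  by (intro poly_eqI) (simp add: coeff_map_poly coeff_pcompose_linear)

theorem mainTheorem1:
  fixes f :: "real poly"
  assumes "real_rooted f"
  shows "real_rooted (laguerre_transform f)"
proof -
  obtain c rs where c: "c \<noteq> 0" and ff: "f = smult c (\<Prod>r\<leftarrow>rs. [:-r,1:])"
    using rr_factor[OF assms] by blast
  define n where "n = degree f"
  have nl: "n = length rs" unfolding n_def ff using c by (simp add: degree_prod_lin)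
  have "Rn n f = smult c (\<Prod>r\<leftarrow>rs. [:1,1-r:])"
    unfolding ff Rn_smult nl Rn_prod ..
  also have "(\<Prod>r\<leftarrow>rs. [:1,1-r:]) = (\<Prod>a\<leftarrow>map (\<lambda>r. 1 - r) rs. [:1,a:])"
    by (simp add: comp_def)
  finally have eq: "Rn n f = smult c (\<Prod>a\<leftarrow>map (\<lambda>r. 1 - r) rs. [:1,a:])" .
  have "real_rooted (opD (Rn n f) (monom 1 n))" unfolding eq by (rule opD_rr[OF c])
  hence rr: "real_rooted (smult (fact n) (pcompose (laguerre_transform f) [:0,-1:]))"
    using I1[OF n_def[symmetric]] by simp
  show ?thesis
    unfolding real_rooted_def
  proof (intro allI impI)
    fix z assume z: "poly (CR (laguerre_transform f)) z = 0"
    have "poly (CR (smult (fact n) (pcompose (laguerre_transform f) [:0,-1:]))) (-z) = 0"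
      by (simp add: CR_smult CR_pcomp poly_pcompose z)
    hence "-z \<in> \<real>" using rr unfolding real_rooted_def by blast
    thus "z \<in> \<real>" by (metis minus_minus Reals_minus)
  qed
qed

end
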